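(* Let $G$ be a finite group, $\alpha\in\mathbb{Z}_{\ge0}$, and let $(A,M)$ be an irreducible NIM-rep of the near-group fusion ring $K(G,\alpha)$ whose basis is partitioned into $p$ $G$-orbits $O_1,\dots,O_p$, with $O_i\cong G/H_i$ as $G$-sets for subgroups $H_i\le G$. For $1\le i,j\le p$ let $c_{i,j}$ be the coefficient of $m'$ in $X\vartriangleright m$ for $m\in O_i$, $m'\in O_j$ (this is independent of the choice of $m,m'$). If $p=1$ then $\alpha=c_{1,1}[G:H_1]-|H_1|/c_{1,1}$. If $p\ge2$ then $\alpha=\sum_{j=1}^p\frac{c_{i,j}c_{j,q}}{c_{i,q}}[G:H_j]$ for any orbit labels $i\neq q$ with $c_{i,q}>0$.
   Context: The near-group fusion ring $K(G,\alpha)$ is the free $\mathbb{Z}$-module with basis $G\cup\{X\}$, with multiplication given by the group law on $G$, $gX=Xg=X$ for $g\in G$, and $X^2=\sum_{g\in G}g+\alpha X$; involution $g^*=g^{-1}$, $X^*=X$. A NIM-rep of a fusion ring $(R,B)$ is a nonzero left $R$-module $A$ which is a free $\mathbb{Z}$-module with a fixed basis $M$, such that each $b\vartriangleright m$ is a non-negative integer combination of elements of $M$, and $(b\vartriangleright m,m')=(m,b^*\vartriangleright m')$ for the form making $M$ orthonormal. The elements of $G$ permute $M$. A NIM-rep is irreducible if no proper nonempty subset of $M$ spans an $R$-submodule. *)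

theory Defs
  imports "HOL-Algebra.Coset" Complex_Main
begin

datatype 'g ng_basis = Gel 'g | Xel

definition ng_basis :: "('g, 'b) monoid_scheme \<Rightarrow> 'g ng_basis set" where
  "ng_basis G = Gel ` carrier G \<union> {Xel}"

fun ng_dual :: "('g, 'b) monoid_scheme \<Rightarrow> 'g ng_basis \<Rightarrow> 'g ng_basis" where
  "ng_dual G (Gel g) = Gel (inv\<^bsub>G\<^esub> g)"
| "ng_dual G Xel = Xel"

fun ng_coeff :: "('g, 'b) monoid_scheme \<Rightarrow> nat \<Rightarrow> 'g ng_basis \<Rightarrow> 'g ng_basis \<Rightarrow> 'g ng_basis \<Rightarrow> nat" where
  "ng_coeff G \<alpha> (Gel g) (Gel h) c = (if c = Gel (g \<otimes>\<^bsub>G\<^esub> h) then 1 else 0)"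
| "ng_coeff G \<alpha> (Gel g) Xel c = (if c = Xel then 1 else 0)"
| "ng_coeff G \<alpha> Xel (Gel g) c = (if c = Xel then 1 else 0)"
| "ng_coeff G \<alpha> Xel Xel c = (if c = Xel then \<alpha> else if c \<in> Gel ` carrier G then 1 else 0)"

text \<open>A NIM-rep of K(G,alpha) with basis M, given by its non-negative integer
  matrices: rho b m m' is the coefficient of m' in b acting on m.
  Conditions: unital left module (associativity written in coordinates),
  and the adjointness (b m, m') = (m, b* m').\<close>
definition ng_nim_rep ::
  "('g, 'b) monoid_scheme \<Rightarrow> nat \<Rightarrow> 'm set \<Rightarrow> ('g ng_basis \<Rightarrow> 'm \<Rightarrow> 'm \<Rightarrow> nat) \<Rightarrow> bool" where
  "ng_nim_rep G \<alpha> M \<rho> \<longleftrightarrow>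
     finite M \<and> M \<noteq> {} \<and>
     (\<forall>m\<in>M. \<forall>m'\<in>M. \<rho> (Gel \<one>\<^bsub>G\<^esub>) m m' = (if m = m' then 1 else 0)) \<and>
     (\<forall>a\<in>ng_basis G. \<forall>b\<in>ng_basis G. \<forall>m\<in>M. \<forall>m'\<in>M.
        (\<Sum>m''\<in>M. \<rho> b m m'' * \<rho> a m'' m') = (\<Sum>c\<in>ng_basis G. ng_coeff G \<alpha> a b c * \<rho> c m m')) \<and>
     (\<forall>b\<in>ng_basis G. \<forall>m\<in>M. \<forall>m'\<in>M. \<rho> b m m' = \<rho> (ng_dual G b) m' m)"

definition ng_nim_irreducible ::
  "('g, 'b) monoid_scheme \<Rightarrow> 'm set \<Rightarrow> ('g ng_basis \<Rightarrow> 'm \<Rightarrow> 'm \<Rightarrow> nat) \<Rightarrow> bool" where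
  "ng_nim_irreducible G M \<rho> \<longleftrightarrow>
     (\<forall>S. S \<subseteq> M \<and> S \<noteq> {} \<and>
          (\<forall>b\<in>ng_basis G. \<forall>m\<in>S. \<forall>m'\<in>M. \<rho> b m m' \<noteq> 0 \<longrightarrow> m' \<in> S) \<longrightarrow> S = M)"

text \<open>G-orbit of a basis element (group elements act by permutation matrices).\<close>
definition G_orbit ::
  "('g, 'b) monoid_scheme \<Rightarrow> 'm set \<Rightarrow> ('g ng_basis \<Rightarrow> 'm \<Rightarrow> 'm \<Rightarrow> nat) \<Rightarrow> 'm \<Rightarrow> 'm set" where
  "G_orbit G M \<rho> m = {m' \<in> M. \<exists>g\<in>carrier G. \<rho> (Gel g) m m' \<noteq> 0}"

definition left_cosets :: "('g, 'b) monoid_scheme \<Rightarrow> 'g set \<Rightarrow> 'g set set" where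
  "left_cosets G H = {g <#\<^bsub>G\<^esub> H | g. g \<in> carrier G}"

definition Gset_iso_cosets ::
  "('g, 'b) monoid_scheme \<Rightarrow> ('g ng_basis \<Rightarrow> 'm \<Rightarrow> 'm \<Rightarrow> nat) \<Rightarrow> 'm set \<Rightarrow> 'g set \<Rightarrow> bool" where
  "Gset_iso_cosets G \<rho> Orb H \<longleftrightarrow>
     (\<exists>\<phi>. bij_betw \<phi> Orb (left_cosets G H) \<and>
        (\<forall>g\<in>carrier G. \<forall>m\<in>Orb. \<forall>m'\<in>Orb. \<rho> (Gel g) m m' \<noteq> 0 \<longrightarrow> \<phi> m' = g <#\<^bsub>G\<^esub> \<phi> m))"

definition orbit_coeff ::
  "('g ng_basis \<Rightarrow> 'm \<Rightarrow> 'm \<Rightarrow> nat) \<Rightarrow> (nat \<Rightarrow> 'm set) \<Rightarrow> nat \<Rightarrow> nat \<Rightarrow> nat" where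
  "orbit_coeff \<rho> Orb i j = \<rho> Xel (SOME m. m \<in> Orb i) (SOME m'. m' \<in> Orb j)"

end

theory Submission
  imports Defs "HOL-Algebra.Left_Coset"
begin

lemma sq_sum_one:
  fixes f :: "'a \<Rightarrow> nat"
  assumes "finite S" "(\<Sum>x\<in>S. (f x)^2) = 1"
  shows "\<exists>k\<in>S. f k = 1 \<and> (\<forall>k'\<in>S. k' \<noteq> k \<longrightarrow> f k' = 0)"
proof -
  obtain k where k: "k \<in> S" "f k \<noteq> 0"
    using assms by (metis (mono_tags, lifting) power_zero_numeral sum.neutral zero_neq_one)
  have "(\<Sum>x\<in>S. (f x)^2) = (f k)^2 + (\<Sum>x\<in>S-{k}. (f x)^2)"
    using assms(1) k(1) by (simp add: sum.remove)
  moreover have "(f k)^2 \<ge> 1" using k(2) by (simp add: Suc_le_eq)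
  ultimately have a: "(f k)^2 = 1" and b: "(\<Sum>x\<in>S-{k}. (f x)^2) = 0" using assms(2) by linarith+
  from a have "f k = 1" by simp
  moreover from b have "\<forall>k'\<in>S. k' \<noteq> k \<longrightarrow> f k' = 0" using assms(1) by simp
  ultimately show ?thesis using k(1) by blast
qed

locale ngr = group G for G :: "('g, 'b) monoid_scheme" +
  fixes \<alpha> :: nat and M :: "'m set"
    and \<rho> :: "'g ng_basis \<Rightarrow> 'm \<Rightarrow> 'm \<Rightarrow> nat"
  assumes fin: "finite (carrier G)"
    and nim: "ng_nim_rep G \<alpha> M \<rho>"
begin

lemma grp: "group G" by (rule is_group)

lemma finM: "finite M" using nim unfolding ng_nim_rep_def by blast

lemma unit: "m \<in> M \<Longrightarrow> m' \<in> M \<Longrightarrow> \<rho> (Gel \<one>\<^bsub>G\<^esub>) m m' = (if m = m' then 1 else 0)"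
  using nim unfolding ng_nim_rep_def by blast

lemma assoc: "a \<in> ng_basis G \<Longrightarrow> b \<in> ng_basis G \<Longrightarrow> m \<in> M \<Longrightarrow> m' \<in> M \<Longrightarrow>
   (\<Sum>m''\<in>M. \<rho> b m m'' * \<rho> a m'' m') = (\<Sum>c\<in>ng_basis G. ng_coeff G \<alpha> a b c * \<rho> c m m')"
  using nim unfolding ng_nim_rep_def by blast

lemma dual: "b \<in> ng_basis G \<Longrightarrow> m \<in> M \<Longrightarrow> m' \<in> M \<Longrightarrow> \<rho> b m m' = \<rho> (ng_dual G b) m' m"
  using nim unfolding ng_nim_rep_def by blast

lemma finB: "finite (ng_basis G)" using fin unfolding ng_basis_def by simp

lemma GelB: "g \<in> carrier G \<Longrightarrow> Gel g \<in> ng_basis G" unfolding ng_basis_def by simp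
lemma XB: "Xel \<in> ng_basis G" unfolding ng_basis_def by simp

lemma mult_gg:
  assumes g: "g \<in> carrier G" and h: "h \<in> carrier G" and m: "m \<in> M" "m' \<in> M"
  shows "(\<Sum>k\<in>M. \<rho> (Gel h) m k * \<rho> (Gel g) k m') = \<rho> (Gel (g \<otimes>\<^bsub>G\<^esub> h)) m m'"
proof -
  have gh: "g \<otimes>\<^bsub>G\<^esub> h \<in> carrier G" using g h grp by (simp add: group.is_monoid monoid.m_closed)
  have "(\<Sum>k\<in>M. \<rho> (Gel h) m k * \<rho> (Gel g) k m') =
     (\<Sum>c\<in>ng_basis G. ng_coeff G \<alpha> (Gel g) (Gel h) c * \<rho> c m m')"
    using assoc[OF GelB[OF g] GelB[OF h] m] .
  also have "\<dots> = (\<Sum>c\<in>ng_basis G. if Gel (g \<otimes>\<^bsub>G\<^esub> h) = c then \<rho> c m m' else 0)"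
    by (rule sum.cong) auto
  also have "\<dots> = \<rho> (Gel (g \<otimes>\<^bsub>G\<^esub> h)) m m'"
    using finB GelB[OF gh] by (simp add: sum.delta)
  finally show ?thesis .
qed

lemma mult_gX:
  assumes g: "g \<in> carrier G" and m: "m \<in> M" "m' \<in> M"
  shows "(\<Sum>k\<in>M. \<rho> (Gel g) m k * \<rho> Xel k m') = \<rho> Xel m m'"
proof -
  have "(\<Sum>k\<in>M. \<rho> (Gel g) m k * \<rho> Xel k m') =
     (\<Sum>c\<in>ng_basis G. ng_coeff G \<alpha> Xel (Gel g) c * \<rho> c m m')"
    using assoc[OF XB GelB[OF g] m] .
  also have "\<dots> = (\<Sum>c\<in>ng_basis G. if Xel = c then \<rho> c m m' else 0)"
    by (rule sum.cong) auto
  also have "\<dots> = \<rho> Xel m m'"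
    using finB XB by (simp add: sum.delta)
  finally show ?thesis .
qed

lemma mult_XX:
  assumes m: "m \<in> M" "m' \<in> M"
  shows "(\<Sum>k\<in>M. \<rho> Xel m k * \<rho> Xel k m') = (\<Sum>g\<in>carrier G. \<rho> (Gel g) m m') + \<alpha> * \<rho> Xel m m'"
proof -
  have "(\<Sum>k\<in>M. \<rho> Xel m k * \<rho> Xel k m') =
     (\<Sum>c\<in>ng_basis G. ng_coeff G \<alpha> Xel Xel c * \<rho> c m m')"
    using assoc[OF XB XB m] .
  also have "\<dots> = (\<Sum>c\<in>insert Xel (Gel ` carrier G). ng_coeff G \<alpha> Xel Xel c * \<rho> c m m')"
    unfolding ng_basis_def by simp
  also have "\<dots> = \<alpha> * \<rho> Xel m m' + (\<Sum>c\<in>Gel ` carrier G. ng_coeff G \<alpha> Xel Xel c * \<rho> c m m')"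
    using fin by (subst sum.insert) auto
  also have "(\<Sum>c\<in>Gel ` carrier G. ng_coeff G \<alpha> Xel Xel c * \<rho> c m m') = (\<Sum>g\<in>carrier G. \<rho> (Gel g) m m')"
    by (subst sum.reindex) (auto simp: inj_on_def)
  finally show ?thesis by simp
qed

lemma row:
  assumes g: "g \<in> carrier G" and m: "m \<in> M"
  shows "\<exists>k\<in>M. \<rho> (Gel g) m k = 1 \<and> (\<forall>k'\<in>M. k' \<noteq> k \<longrightarrow> \<rho> (Gel g) m k' = 0)"
proof -
  have ig: "inv\<^bsub>G\<^esub> g \<in> carrier G" using g grp by simp
  have "(\<Sum>k\<in>M. \<rho> (Gel g) m k * \<rho> (Gel (inv\<^bsub>G\<^esub> g)) k m) = \<rho> (Gel (inv\<^bsub>G\<^esub> g \<otimes>\<^bsub>G\<^esub> g)) m m"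
    using mult_gg[OF ig g m m] .
  also have "\<dots> = 1" using unit[OF m m] g grp by simp
  finally have s: "(\<Sum>k\<in>M. \<rho> (Gel g) m k * \<rho> (Gel (inv\<^bsub>G\<^esub> g)) k m) = 1" .
  have "\<And>k. k \<in> M \<Longrightarrow> \<rho> (Gel (inv\<^bsub>G\<^esub> g)) k m = \<rho> (Gel g) m k"
    using dual[OF GelB[OF ig] _ m] g grp by simp
  hence "(\<Sum>k\<in>M. (\<rho> (Gel g) m k)^2) = 1" using s by (simp add: power2_eq_square)
  thus ?thesis using sq_sum_one finM by blast
qed

lemma perm_sum:
  assumes g: "g \<in> carrier G" and m: "m \<in> M" "k \<in> M" and nz: "\<rho> (Gel g) m k \<noteq> 0"
  shows "(\<Sum>k'\<in>M. \<rho> (Gel g) m k' * F k') = F k"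
proof -
  obtain k0 where k0: "k0 \<in> M" "\<rho> (Gel g) m k0 = 1" "\<forall>k'\<in>M. k' \<noteq> k0 \<longrightarrow> \<rho> (Gel g) m k' = 0"
    using row[OF g m(1)] by blast
  have kk: "k = k0"
  proof (rule ccontr)
    assume "k \<noteq> k0"
    hence "\<rho> (Gel g) m k = 0" using k0(3) m(2) by simp
    thus False using nz by simp
  qed
  have "(\<Sum>k'\<in>M. \<rho> (Gel g) m k' * F k') = \<rho> (Gel g) m k * F k + (\<Sum>k'\<in>M-{k}. \<rho> (Gel g) m k' * F k')"
    by (rule sum.remove[OF finM m(2)])
  also have "(\<Sum>k'\<in>M-{k}. \<rho> (Gel g) m k' * F k') = 0" using k0 kk by simp
  finally show ?thesis using k0 kk by simp
qed

lemma row_sum: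
  assumes g: "g \<in> carrier G" and m: "m \<in> M"
  shows "(\<Sum>k\<in>M. \<rho> (Gel g) m k) = 1"
proof -
  obtain k0 where k0: "k0 \<in> M" "\<rho> (Gel g) m k0 = 1"
    using row[OF g m] by blast
  show ?thesis using perm_sum[OF g m k0(1), of "\<lambda>_. 1"] k0 by simp
qed

lemma X_inv:
  assumes g: "g \<in> carrier G" and m: "m \<in> M" "k \<in> M" "m' \<in> M" and nz: "\<rho> (Gel g) m k \<noteq> 0"
  shows "\<rho> Xel k m' = \<rho> Xel m m'"
  using perm_sum[OF g m(1,2) nz, of "\<lambda>k. \<rho> Xel k m'"] mult_gX[OF g m(1,3)] by simp

lemma orb_sub: "G_orbit G M \<rho> m \<subseteq> M" unfolding G_orbit_def by auto

lemma orb_self: "m \<in> M \<Longrightarrow> m \<in> G_orbit G M \<rho> m"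
  unfolding G_orbit_def using unit grp by (auto intro!: bexI[of _ "\<one>\<^bsub>G\<^esub>"])

lemma orb_sym:
  assumes "m' \<in> G_orbit G M \<rho> m" "m \<in> M" shows "m \<in> G_orbit G M \<rho> m'"
proof -
  obtain g where g: "g \<in> carrier G" "\<rho> (Gel g) m m' \<noteq> 0" "m' \<in> M"
    using assms unfolding G_orbit_def by blast
  have "\<rho> (Gel g) m m' = \<rho> (Gel (inv\<^bsub>G\<^esub> g)) m' m" using dual[OF GelB[OF g(1)] assms(2) g(3)] by simp
  thus ?thesis using g assms grp unfolding G_orbit_def by (auto intro!: bexI[of _ "inv\<^bsub>G\<^esub> g"])
qed

lemma orb_trans:
  assumes "m' \<in> G_orbit G M \<rho> m" "m'' \<in> G_orbit G M \<rho> m'" "m \<in> M"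
  shows "m'' \<in> G_orbit G M \<rho> m"
proof -
  obtain h where h: "h \<in> carrier G" "\<rho> (Gel h) m m' \<noteq> 0" "m' \<in> M"
    using assms unfolding G_orbit_def by blast
  obtain g where g: "g \<in> carrier G" "\<rho> (Gel g) m' m'' \<noteq> 0" "m'' \<in> M"
    using assms unfolding G_orbit_def by blast
  have "\<rho> (Gel h) m m' * \<rho> (Gel g) m' m'' \<le> (\<Sum>k\<in>M. \<rho> (Gel h) m k * \<rho> (Gel g) k m'')"
    by (rule member_le_sum) (use h finM in auto)
  also have "\<dots> = \<rho> (Gel (g \<otimes>\<^bsub>G\<^esub> h)) m m''" using mult_gg[OF g(1) h(1) assms(3) g(3)] .
  finally have "\<rho> (Gel (g \<otimes>\<^bsub>G\<^esub> h)) m m'' \<noteq> 0" using h g by (metis le_zero_eq mult_is_0)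
  thus ?thesis using g h grp unfolding G_orbit_def by (auto intro!: bexI[of _ "g \<otimes>\<^bsub>G\<^esub> h"])
qed

lemma orb_eq:
  assumes "x \<in> G_orbit G M \<rho> a" "a \<in> M" shows "G_orbit G M \<rho> x = G_orbit G M \<rho> a"
proof -
  have xM: "x \<in> M" using assms orb_sub by blast
  have "a \<in> G_orbit G M \<rho> x" using orb_sym assms by blast
  thus ?thesis using orb_trans assms xM by blast
qed

lemma X_orb1:
  assumes "m' \<in> G_orbit G M \<rho> m" "m \<in> M" "k \<in> M"
  shows "\<rho> Xel m' k = \<rho> Xel m k"
proof -
  obtain g where g: "g \<in> carrier G" "\<rho> (Gel g) m m' \<noteq> 0" "m' \<in> M"
    using assms unfolding G_orbit_def by blast
  show ?thesis using X_inv[OF g(1) assms(2) g(3) assms(3) g(2)] .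
qed

lemma X_orb2:
  assumes "m' \<in> G_orbit G M \<rho> m" "m \<in> M" "k \<in> M"
  shows "\<rho> Xel k m' = \<rho> Xel k m"
proof -
  have m'M: "m' \<in> M" using assms orb_sub by blast
  have "\<rho> Xel k m' = \<rho> Xel m' k" using dual[OF XB assms(3) m'M] by simp
  also have "\<dots> = \<rho> Xel m k" using X_orb1 assms by blast
  also have "\<dots> = \<rho> Xel k m" using dual[OF XB assms(2,3)] by simp
  finally show ?thesis .
qed

end

theorem corollary3p21:
  fixes G :: "('g, 'b) monoid_scheme" and \<alpha> :: nat and M :: "'m set"
    and \<rho> :: "'g ng_basis \<Rightarrow> 'm \<Rightarrow> 'm \<Rightarrow> nat"
    and p :: nat and Orb :: "nat \<Rightarrow> 'm set" and H :: "nat \<Rightarrow> 'g set"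
  assumes grp: "group G" and fin: "finite (carrier G)"
    and nim: "ng_nim_rep G \<alpha> M \<rho>" and irr: "ng_nim_irreducible G M \<rho>"
    and p_pos: "p \<ge> 1"
    and orbits: "\<forall>i\<in>{1..p}. \<exists>m\<in>M. Orb i = G_orbit G M \<rho> m"
    and distinct: "\<forall>i\<in>{1..p}. \<forall>j\<in>{1..p}. i \<noteq> j \<longrightarrow> Orb i \<noteq> Orb j"
    and cover: "(\<Union>i\<in>{1..p}. Orb i) = M"
    and subgrp: "\<forall>i\<in>{1..p}. subgroup (H i) G"
    and iso: "\<forall>i\<in>{1..p}. Gset_iso_cosets G \<rho> (Orb i) (H i)"
  shows "(p = 1 \<longrightarrow>
            real \<alpha> = real (orbit_coeff \<rho> Orb 1 1) * (real (card (carrier G)) / real (card (H 1)))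
                      - real (card (H 1)) / real (orbit_coeff \<rho> Orb 1 1))
       \<and> (p \<ge> 2 \<longrightarrow>
            (\<forall>i\<in>{1..p}. \<forall>q\<in>{1..p}. i \<noteq> q \<longrightarrow> orbit_coeff \<rho> Orb i q > 0 \<longrightarrow>
               real \<alpha> = (\<Sum>j=1..p. real (orbit_coeff \<rho> Orb i j) * real (orbit_coeff \<rho> Orb j q)
                                       / real (orbit_coeff \<rho> Orb i q)
                                       * (real (card (carrier G)) / real (card (H j))))))"
proof -
  interpret ngr G \<alpha> M \<rho> using grp fin nim by (simp add: ngr_def ngr_axioms_def)
  define s where "s i = (SOME m. m \<in> Orb i)" for i
  define c where "c i j = orbit_coeff \<rho> Orb i j" for i j
  have c_def': "c i j = \<rho> Xel (s i) (s j)" for i j unfolding c_def s_def orbit_coeff_def by simp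
  have s_in: "s i \<in> Orb i" if ii: "i \<in> {1..p}" for i
  proof -
    obtain a where a: "a \<in> M" "Orb i = G_orbit G M \<rho> a" using bspec[OF orbits ii] by (elim bexE)
    have "a \<in> Orb i" unfolding a(2) by (rule orb_self[OF a(1)])
    thus ?thesis unfolding s_def by (rule someI)
  qed
  have orb_eq2: "Orb i = G_orbit G M \<rho> m" if ii: "i \<in> {1..p}" "m \<in> Orb i" for i m
  proof -
    obtain a where a: "a \<in> M" "Orb i = G_orbit G M \<rho> a" using bspec[OF orbits ii(1)] by (elim bexE)
    show ?thesis using orb_eq[of m a] a ii(2) by simp
  qed
  have OrbM: "Orb i \<subseteq> M" if "i \<in> {1..p}" for i using cover that by blast
  have coeff: "\<rho> Xel m k = c i j" if "i \<in> {1..p}" "j \<in> {1..p}" "m \<in> Orb i" "k \<in> Orb j" for i j m k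
  proof -
    have m1: "m \<in> G_orbit G M \<rho> (s i)" using orb_eq2[OF that(1) s_in[OF that(1)]] that by simp
    have k1: "k \<in> G_orbit G M \<rho> (s j)" using orb_eq2[OF that(2) s_in[OF that(2)]] that by simp
    have siM: "s i \<in> M" "s j \<in> M" "k \<in> M" using s_in OrbM that by blast+
    have "\<rho> Xel m k = \<rho> Xel (s i) k" using X_orb1[OF m1 siM(1,3)] .
    also have "\<dots> = \<rho> Xel (s i) (s j)" using X_orb2[OF k1 siM(2,1)] .
    finally show ?thesis using c_def' by simp
  qed
  have disj: "Orb i \<inter> Orb j = {}" if "i \<in> {1..p}" "j \<in> {1..p}" "i \<noteq> j" for i j
  proof (rule ccontr)
    assume "Orb i \<inter> Orb j \<noteq> {}"
    then obtain x where "x \<in> Orb i" "x \<in> Orb j" by blast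
    hence "Orb i = Orb j" using orb_eq2 that by metis
    thus False using distinct that by blast
  qed
  have cardO: "card (Orb i) * card (H i) = card (carrier G)" if "i \<in> {1..p}" for i
  proof -
    have "Gset_iso_cosets G \<rho> (Orb i) (H i)" using iso that by blast
    then obtain \<phi> where "bij_betw \<phi> (Orb i) (left_cosets G (H i))" unfolding Gset_iso_cosets_def by blast
    hence "card (Orb i) = card (left_cosets G (H i))" by (rule bij_betw_same_card)
    also have "left_cosets G (H i) = lcosets\<^bsub>G\<^esub> (H i)" unfolding left_cosets_def LCOSETS_def by auto
    moreover have "subgroup (H i) G" using subgrp that by blast
    ultimately show ?thesis using group.l_lagrange[OF grp fin] unfolding order_def by simp
  qed
  have Hpos: "card (H i) > 0" if "i \<in> {1..p}" for i
  proof -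
    have "subgroup (H i) G" using subgrp that by blast
    hence "finite (H i)" "\<one>\<^bsub>G\<^esub> \<in> H i" using fin subgroup.subset subgroup.one_closed finite_subset by metis+
    thus ?thesis using card_gt_0_iff by blast
  qed
  have cardOr: "real (card (Orb i)) = real (card (carrier G)) / real (card (H i))" if "i \<in> {1..p}" for i
    using cardO[OF that] Hpos[OF that] by (simp add: field_simps flip: of_nat_mult)
  have finO: "finite (Orb i)" if "i \<in> {1..p}" for i using OrbM[OF that] finM finite_subset by blast
  have sumdec: "(\<Sum>k\<in>M. F k) = (\<Sum>j\<in>{1..p}. \<Sum>k\<in>Orb j. F k)" for F :: "'m \<Rightarrow> nat"
  proof -
    have "(\<Sum>k\<in>M. F k) = (\<Sum>k\<in>(\<Union>i\<in>{1..p}. Orb i). F k)" using cover by simp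
    also have "\<dots> = (\<Sum>j\<in>{1..p}. \<Sum>k\<in>Orb j. F k)"
      by (rule sum.UNION_disjoint) (auto simp: finO disj)
    finally show ?thesis .
  qed
  show ?thesis
  proof (intro conjI impI ballI)
    assume p1: "p = 1"
    have O1: "Orb 1 = M" using cover p1 by simp
    have one: "1 \<in> {1..p}" using p1 by simp
    have cc: "\<rho> Xel m k = c 1 1" if "m \<in> M" "k \<in> M" for m k using coeff[OF one one] that O1 by simp
    have sM: "s 1 \<in> M" using s_in[OF one] O1 by simp
    define n where "n = card M"
    define h where "h = card (H 1)"
    define N where "N = card (carrier G)"
    have nh: "n * h = N" using cardO[OF one] O1 unfolding n_def h_def N_def by simp
    have hpos: "h > 0" using Hpos[OF one] h_def by simp
    define C where "C = c 1 1"
    define s1 where "s1 = s 1"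
    have s1M: "s1 \<in> M" using sM s1_def by simp
    have ccC: "\<rho> Xel m k = C" if "m \<in> M" "k \<in> M" for m k using cc[OF that] C_def by simp
    have L: "(\<Sum>m'\<in>M. \<Sum>k\<in>M. \<rho> Xel s1 k * \<rho> Xel k m') = n * (n * (C * C))"
    proof -
      have "(\<Sum>m'\<in>M. \<Sum>k\<in>M. \<rho> Xel s1 k * \<rho> Xel k m') = (\<Sum>m'\<in>M. \<Sum>k\<in>M. C * C)"
        by (intro sum.cong refl) (simp add: ccC s1M)
      thus ?thesis by (simp add: n_def)
    qed
    have R: "(\<Sum>m'\<in>M. \<Sum>k\<in>M. \<rho> Xel s1 k * \<rho> Xel k m') = N + n * (\<alpha> * C)"
    proof -
      have "(\<Sum>m'\<in>M. \<Sum>k\<in>M. \<rho> Xel s1 k * \<rho> Xel k m') =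
          (\<Sum>m'\<in>M. (\<Sum>g\<in>carrier G. \<rho> (Gel g) s1 m') + \<alpha> * C)"
        by (intro sum.cong refl) (simp only: mult_XX[OF s1M], simp add: ccC s1M)
      also have "\<dots> = (\<Sum>m'\<in>M. \<Sum>g\<in>carrier G. \<rho> (Gel g) s1 m') + n * (\<alpha> * C)"
        by (simp add: sum.distrib n_def)
      also have "(\<Sum>m'\<in>M. \<Sum>g\<in>carrier G. \<rho> (Gel g) s1 m') = (\<Sum>g\<in>carrier G. \<Sum>m'\<in>M. \<rho> (Gel g) s1 m')"
        by (rule sum.swap)
      also have "\<dots> = (\<Sum>g\<in>carrier G. 1)"
        by (intro sum.cong refl) (simp add: row_sum s1M)
      also have "\<dots> = N" by (simp add: N_def)
      finally show ?thesis .
    qed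
    have "n * (n * (C * C)) = n * (h + \<alpha> * C)" using L R nh by (simp add: algebra_simps)
    moreover have "n > 0" using finM sM unfolding n_def card_gt_0_iff by blast
    ultimately have eq: "n * (C * C) = h + \<alpha> * C" by simp
    hence cpos: "C > 0" using hpos by (cases C) auto
    have eqr: "real n * (real C * real C) = real h + real \<alpha> * real C"
      using arg_cong[OF eq, of real] by simp
    have nr: "real n = real N / real h" using nh hpos by (simp add: field_simps flip: of_nat_mult)
    have Cr: "real C > 0" using cpos by simp
    have "real \<alpha> * real C = real n * real C * real C - real h" using eqr by (simp add: algebra_simps)
    hence "real \<alpha> = (real n * real C * real C - real h) / real C" using Cr by (simp add: eq_divide_eq)
    also have "\<dots> = real n * real C - real h / real C" using Cr by (simp add: diff_divide_distrib)
    finally have "real \<alpha> = real C * (real N / real h) - real h / real C" using nr by simp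
    thus "real \<alpha> = real (orbit_coeff \<rho> Orb 1 1) * (real (card (carrier G)) / real (card (H 1)))
                      - real (card (H 1)) / real (orbit_coeff \<rho> Orb 1 1)"
      unfolding C_def c_def N_def h_def .
  next
    fix i q assume i: "i \<in> {1..p}" and q: "q \<in> {1..p}"
    assume iq: "i \<noteq> q" and cpos: "0 < orbit_coeff \<rho> Orb i q"
    have sM: "s i \<in> M" "s q \<in> M" using s_in i q OrbM by blast+
    have zero: "(\<Sum>g\<in>carrier G. \<rho> (Gel g) (s i) (s q)) = 0"
    proof (rule sum.neutral, rule ballI, rule ccontr)
      fix g assume "g \<in> carrier G" "\<rho> (Gel g) (s i) (s q) \<noteq> 0"
      hence "s q \<in> G_orbit G M \<rho> (s i)" using sM unfolding G_orbit_def by blast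
      hence "s q \<in> Orb i" using orb_eq2[OF i s_in[OF i]] by simp
      thus False using disj[OF i q iq] s_in[OF q] by blast
    qed
    have "(\<Sum>k\<in>M. \<rho> Xel (s i) k * \<rho> Xel k (s q)) = (\<Sum>g\<in>carrier G. \<rho> (Gel g) (s i) (s q)) + \<alpha> * \<rho> Xel (s i) (s q)"
      by (rule mult_XX[OF sM])
    hence A1: "(\<Sum>k\<in>M. \<rho> Xel (s i) k * \<rho> Xel k (s q)) = \<alpha> * c i q"
      unfolding zero c_def' by simp
    have A2: "(\<Sum>k\<in>M. \<rho> Xel (s i) k * \<rho> Xel k (s q)) = (\<Sum>j\<in>{1..p}. card (Orb j) * (c i j * c j q))"
    proof -
      have "(\<Sum>k\<in>M. \<rho> Xel (s i) k * \<rho> Xel k (s q)) = (\<Sum>j\<in>{1..p}. \<Sum>k\<in>Orb j. \<rho> Xel (s i) k * \<rho> Xel k (s q))"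
        by (rule sumdec)
      also have "\<dots> = (\<Sum>j\<in>{1..p}. \<Sum>k\<in>Orb j. c i j * c j q)"
      proof (rule sum.cong[OF refl], rule sum.cong[OF refl])
        fix j k assume j: "j \<in> {1..p}" and k: "k \<in> Orb j"
        show "\<rho> Xel (s i) k * \<rho> Xel k (s q) = c i j * c j q"
          using coeff[OF i j s_in[OF i] k] coeff[OF j q k s_in[OF q]] by simp
      qed
      also have "\<dots> = (\<Sum>j\<in>{1..p}. card (Orb j) * (c i j * c j q))" by simp
      finally show ?thesis .
    qed
    have eq: "(\<Sum>j\<in>{1..p}. card (Orb j) * (c i j * c j q)) = \<alpha> * c i q" using A1 A2 by simp
    have eqr: "(\<Sum>j\<in>{1..p}. real (card (Orb j)) * (real (c i j) * real (c j q))) = real \<alpha> * real (c i q)"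
      using arg_cong[OF eq, of real] by simp
    have cq: "real (c i q) > 0" using cpos c_def by simp
    have "(\<Sum>j=1..p. real (c i j) * real (c j q) / real (c i q) * (real (card (carrier G)) / real (card (H j))))
        = (\<Sum>j=1..p. real (card (Orb j)) * (real (c i j) * real (c j q)) / real (c i q))"
    proof (rule sum.cong[OF refl])
      fix j assume j: "j \<in> {1..p}"
      show "real (c i j) * real (c j q) / real (c i q) * (real (card (carrier G)) / real (card (H j)))
        = real (card (Orb j)) * (real (c i j) * real (c j q)) / real (c i q)"
        unfolding cardOr[OF j] by (simp add: mult_ac)
    qed
    also have "\<dots> = (\<Sum>j=1..p. real (card (Orb j)) * (real (c i j) * real (c j q))) / real (c i q)"
      by (rule sum_divide_distrib[symmetric])
    also have "\<dots> = real \<alpha>" unfolding eqr using cq by simp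
    finally show "real \<alpha> = (\<Sum>j=1..p. real (orbit_coeff \<rho> Orb i j) * real (orbit_coeff \<rho> Orb j q)
                                       / real (orbit_coeff \<rho> Orb i q)
                                       * (real (card (carrier G)) / real (card (H j))))"
      unfolding c_def by simp
  qed
qed

end
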